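(* Let $q$ be a prime power, let $k\ge 3$ and $n=2k\le q$, and let $h=(k-1)+r$ with $1\le r\le k-2$. Let $\alpha_1,\dots,\alpha_n\in\mathbb{F}_q$ be pairwise distinct, let $G_{h,k}$ be the $k\times n$ matrix whose rows are $(\alpha_1^{e},\dots,\alpha_n^{e})$ for $e=0,1,\dots,k-2$ and $e=h$, and for $\mathbf v=(v_1,\dots,v_n)\in(\mathbb{F}_q^* )^n$ let $C_{h,\mathbf v}$ be the linear code generated by $G_{h,k}\cdot\mathrm{diag}(v_1,\dots,v_n)$. Let $u_i=\prod_{j\ne i}(\alpha_i-\alpha_j)^{-1}$ and $S_1=\alpha_1+\dots+\alpha_n$. Then there exists $\mathbf v\in(\mathbb{F}_q^* )^n$ such that $C_{h,\mathbf v}$ is self-dual if and only if $r=1$ and the following hold: (i) either all $u_i$ ($1\le i\le n$) are squares in $\mathbb{F}_q$, or all $u_i$ are non-squares in $\mathbb{F}_q$; (ii) $S_1=0$.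
   Context: Convention: $0^0=1$. A linear code $C$ is self-dual if $C=C^\perp$, where $C^\perp$ is the dual with respect to the Euclidean inner product. *)

theory Defs
  imports Main
begin

text \<open>Vectors of length n over a field are functions on nat, supported on {0..<n}
  (coordinates indexed 0..n-1). A k x n matrix is a function nat => nat => 'a.\<close>

definition row_space :: "nat \<Rightarrow> nat \<Rightarrow> (nat \<Rightarrow> nat \<Rightarrow> 'a::field) \<Rightarrow> (nat \<Rightarrow> 'a) set" where
  "row_space k n M = {x. \<exists>c::nat \<Rightarrow> 'a. x = (\<lambda>j. if j < n then (\<Sum>i<k. c i * M i j) else 0)}"

definition dual_code :: "nat \<Rightarrow> (nat \<Rightarrow> 'a::field) set \<Rightarrow> (nat \<Rightarrow> 'a) set" where
  "dual_code n C = {y. (\<forall>j\<ge>n. y j = 0) \<and> (\<forall>x\<in>C. (\<Sum>j<n. x j * y j) = 0)}"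

definition self_dual :: "nat \<Rightarrow> (nat \<Rightarrow> 'a::field) set \<Rightarrow> bool" where
  "self_dual n C \<longleftrightarrow> C = dual_code n C"

definition row_exp :: "nat \<Rightarrow> nat \<Rightarrow> nat \<Rightarrow> nat" where
  "row_exp k h i = (if i < k - 1 then i else h)"

definition G_hk :: "nat \<Rightarrow> nat \<Rightarrow> (nat \<Rightarrow> 'a::field) \<Rightarrow> nat \<Rightarrow> nat \<Rightarrow> 'a" where
  "G_hk h k alpha i j = alpha j ^ row_exp k h i"

definition C_hv :: "nat \<Rightarrow> nat \<Rightarrow> nat \<Rightarrow> (nat \<Rightarrow> 'a::field) \<Rightarrow> (nat \<Rightarrow> 'a) \<Rightarrow> (nat \<Rightarrow> 'a) set" where
  "C_hv n h k alpha v = row_space k n (\<lambda>i j. G_hk h k alpha i j * v j)"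

definition u_coef :: "nat \<Rightarrow> (nat \<Rightarrow> 'a::field) \<Rightarrow> nat \<Rightarrow> 'a" where
  "u_coef n alpha i = (\<Prod>j\<in>{..<n} - {i}. inverse (alpha i - alpha j))"

definition is_square :: "'a::field \<Rightarrow> bool" where
  "is_square x \<longleftrightarrow> (\<exists>y. x = y ^ 2)"

end

theory Submission
  imports Defs "HOL-Computational_Algebra.Polynomial"
begin


definition LP :: "(nat \<Rightarrow> 'a::field) \<Rightarrow> nat set \<Rightarrow> 'a poly" where
  "LP alpha A = (\<Prod>l\<in>A. [:- alpha l, 1:])"

lemma LP_degree: "finite A \<Longrightarrow> degree (LP alpha A) = card A"
  unfolding LP_def by (subst degree_prod_eq_sum_degree) auto

lemma LP_lead: assumes that: "finite A" shows "coeff (LP alpha A) (card A) = 1"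
proof -
  have "lead_coeff (\<Prod>l\<in>A. [:- alpha l, 1:]) = 1" by (simp only: lead_coeff_prod) simp
  then have "lead_coeff (LP alpha A) = 1" by (simp only: LP_def)
  moreover have "degree (LP alpha A) = card A" using that by (rule LP_degree)
  ultimately show ?thesis by metis
qed

lemma LP_nonzero: "LP alpha A \<noteq> 0"
  unfolding LP_def by (cases "finite A") (auto simp: prod_zero_iff)

lemma LP_insert: "finite A \<Longrightarrow> x \<notin> A \<Longrightarrow> LP alpha (insert x A) = [:- alpha x, 1:] * LP alpha A"
  unfolding LP_def by simp

lemma LP_sub: "finite A \<Longrightarrow> card A = Suc m \<Longrightarrow> coeff (LP alpha A) m = - (\<Sum>l\<in>A. alpha l)"
proof (induction A arbitrary: m rule: finite_induct)
  case empty then show ?case by simp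
next
  case (insert x A)
  have e: "[:- alpha x, 1:] * LP alpha A = smult (- alpha x) (LP alpha A) + pCons 0 (LP alpha A)"
    by (simp add: algebra_simps)
  have cA: "card A = m" using insert by simp
  show ?case
  proof (cases m)
    case 0
    then have "A = {}" using cA insert by auto
    then show ?thesis using \<open>m = 0\<close> by (simp add: LP_def)
  next
    case (Suc m')
    have "coeff (LP alpha A) m' = - (\<Sum>l\<in>A. alpha l)" using insert Suc cA by simp
    moreover have "coeff (LP alpha A) m = 1" using LP_lead[OF insert(1)] cA by simp
    ultimately show ?thesis using insert Suc
      by (simp add: LP_insert e)
  qed
qed

lemma poly_LP: "poly (LP alpha A) x = (\<Prod>l\<in>A. x - alpha l)"
  unfolding LP_def poly_prod by simp

lemma u_coef_alt: "u_coef n alpha i = inverse (\<Prod>j\<in>{..<n} - {i}. alpha i - alpha j)"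
  unfolding u_coef_def using prod_inversef[of "\<lambda>j. alpha i - alpha j" "{..<n} - {i}"]
  by (simp add: o_def)

lemma u_coef_nz: assumes "inj_on alpha {..<n}" "i < n" shows "u_coef n alpha i \<noteq> 0"
  unfolding u_coef_alt using assms by (auto simp: inj_on_def)

lemma Pj_eval:
  assumes inj: "inj_on alpha {..<n}" and "j < n" "l < n"
  shows "poly (LP alpha ({..<n} - {j})) (alpha l) = (if l = j then inverse (u_coef n alpha j) else 0)"
proof (cases "l = j")
  case True
  then show ?thesis unfolding u_coef_alt poly_LP by simp
next
  case False
  then have "l \<in> {..<n} - {j}" using assms by auto
  then show ?thesis unfolding poly_LP using False
    by (auto intro!: prod_zero)
qed

lemma interp:
  assumes inj: "inj_on alpha {..<n}" and deg: "degree f < n"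
  shows "f = (\<Sum>j<n. smult (poly f (alpha j) * u_coef n alpha j) (LP alpha ({..<n} - {j})))"
    (is "f = ?g")
proof (rule ccontr)
  assume ne: "f \<noteq> ?g"
  define D where "D = f - ?g"
  have D0: "D \<noteq> 0" using ne unfolding D_def by simp
  have dg: "degree ?g < n"
  proof (rule degree_sum_less)
    show "0 < n" using deg by simp
    fix j assume "j \<in> {..<n}"
    have "degree (LP alpha ({..<n} - {j})) < n"
      using \<open>j \<in> {..<n}\<close> by (simp add: LP_degree)
    then show "degree (smult (poly f (alpha j) * u_coef n alpha j) (LP alpha ({..<n} - {j}))) < n"
      using degree_smult_le le_less_trans by blast
  qed
  have dD: "degree D < n" unfolding D_def using deg dg by (rule degree_diff_less)
  have roots: "alpha ` {..<n} \<subseteq> {x. poly D x = 0}"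
  proof safe
    fix l assume l: "l < n"
    have "poly ?g (alpha l) = (\<Sum>j<n. poly f (alpha j) * u_coef n alpha j *
          (if l = j then inverse (u_coef n alpha j) else 0))"
      by (simp add: poly_sum Pj_eval[OF inj _ l])
    also have "\<dots> = poly f (alpha l) * u_coef n alpha l * inverse (u_coef n alpha l)"
      using l by (simp add: if_distrib[of "\<lambda>x. _ * x"] sum.delta cong: if_cong)
    also have "\<dots> = poly f (alpha l)" using u_coef_nz[OF inj l] by simp
    finally show "poly D (alpha l) = 0" unfolding D_def by simp
  qed
  have "card (alpha ` {..<n}) = n" using inj by (simp add: card_image)
  moreover have "card (alpha ` {..<n}) \<le> card {x. poly D x = 0}"
    using roots by (intro card_mono poly_roots_finite D0) 
  moreover have "card {x. poly D x = 0} \<le> degree D" using D0 by (rule card_poly_roots_bound)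
  ultimately show False using dD by simp
qed

lemma moment:
  assumes inj: "inj_on alpha {..<n}" and n: "0 < n" and deg: "degree f \<le> n"
  shows "(\<Sum>j<n. u_coef n alpha j * poly f (alpha j)) = coeff f (n - 1) + coeff f n * (\<Sum>j<n. alpha j)"
proof -
  define c where "c = coeff f n"
  define P where "P = LP alpha {..<n}"
  define f' where "f' = f - smult c P"
  have dP: "degree P = n" unfolding P_def by (simp add: LP_degree)
  have cP: "coeff P n = 1" unfolding P_def using LP_lead[of "{..<n}" alpha] by simp
  have cP1: "coeff P (n - 1) = - (\<Sum>j<n. alpha j)" unfolding P_def
    using LP_sub[of "{..<n}" "n - 1" alpha] n by simp
  have df': "degree f' < n"
  proof -
    have "degree f' \<le> n - 1"
    proof (rule degree_le, intro allI impI)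
      fix i assume "n - 1 < i"
      then have "i = n \<or> i > n" by auto
      then show "coeff f' i = 0"
      proof
        assume "i = n" then show ?thesis unfolding f'_def c_def using cP by simp
      next
        assume "i > n" then show ?thesis unfolding f'_def using deg dP
          by (simp add: coeff_eq_0)
      qed
    qed
    then show ?thesis using n by simp
  qed
  have pf': "poly f' (alpha j) = poly f (alpha j)" if "j < n" for j
  proof -
    have "poly P (alpha j) = 0" unfolding P_def poly_LP using that
      by (auto intro!: prod_zero)
    then show ?thesis unfolding f'_def by simp
  qed
  have "coeff f' (n - 1) = (\<Sum>j<n. poly f' (alpha j) * u_coef n alpha j * coeff (LP alpha ({..<n} - {j})) (n - 1))"
    by (subst interp[OF inj df'], simp add: coeff_sum)
  also have "\<dots> = (\<Sum>j<n. u_coef n alpha j * poly f (alpha j))"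
  proof (rule sum.cong[OF refl])
    fix j assume j: "j \<in> {..<n}"
    have "card ({..<n} - {j}) = n - 1" using j by simp
    then have "coeff (LP alpha ({..<n} - {j})) (n - 1) = 1" using LP_lead[of "{..<n} - {j}" alpha] by simp
    then show "poly f' (alpha j) * u_coef n alpha j * coeff (LP alpha ({..<n} - {j})) (n - 1) =
         u_coef n alpha j * poly f (alpha j)" using pf' j by simp
  qed
  finally have "(\<Sum>j<n. u_coef n alpha j * poly f (alpha j)) = coeff f' (n - 1)" by simp
  also have "\<dots> = coeff f (n - 1) + coeff f n * (\<Sum>j<n. alpha j)"
    unfolding f'_def c_def using cP1 by simp
  finally show ?thesis .
qed

lemma moment_pow:
  assumes inj: "inj_on alpha {..<n}" and n: "0 < n" and m: "m \<le> n"
  shows "(\<Sum>j<n. u_coef n alpha j * alpha j ^ m) =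
     (if m = n - 1 then 1 else if m = n then (\<Sum>j<n. alpha j) else 0)"
proof -
  have "degree (monom (1::'a) m) \<le> n" using m degree_monom_le order_trans by blast
  then show ?thesis
    using moment[OF inj n, of "monom 1 m"] m n by (auto simp: poly_monom coeff_monom)
qed

lemma sum_poly_moments:
  fixes f :: "'a::field poly"
  assumes "degree f \<le> d"
  shows "(\<Sum>j<n. w j * poly f (x j)) = (\<Sum>m\<le>d. coeff f m * (\<Sum>j<n. w j * x j ^ m))"
proof -
  have "(\<Sum>j<n. w j * poly f (x j)) = (\<Sum>j<n. w j * (\<Sum>m\<le>d. coeff f m * x j ^ m))"
  proof (rule sum.cong[OF refl])
    fix j
    have "poly f (x j) = (\<Sum>m\<le>degree f. coeff f m * x j ^ m)" by (rule poly_altdef)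
    also have "\<dots> = (\<Sum>m\<le>d. coeff f m * x j ^ m)"
      using assms by (intro sum.mono_neutral_left) (auto simp: coeff_eq_0)
    finally show "w j * poly f (x j) = w j * (\<Sum>m\<le>d. coeff f m * x j ^ m)" by simp
  qed
  also have "\<dots> = (\<Sum>m\<le>d. coeff f m * (\<Sum>j<n. w j * x j ^ m))"
    by (simp add: sum_distrib_left sum_distrib_right mult_ac sum.swap[of _ "{..<n}"])
  finally show ?thesis .
qed

lemma pair:
  assumes inj: "inj_on alpha {..<n}" and n: "2 \<le> n"
    and mom: "\<And>m. m \<le> n - 2 \<Longrightarrow> (\<Sum>j<n. w j * alpha j ^ m) = 0"
    and a: "a < n" and b: "b < n"
  shows "w a * u_coef n alpha b = w b * u_coef n alpha a"
proof (cases "a = b")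
  case True then show ?thesis by (simp add: mult.commute)
next
  case False
  define f where "f = LP alpha ({..<n} - {a, b})"
  have df: "degree f = n - 2" unfolding f_def using a b False by (simp add: LP_degree card_Diff_subset)
  have pf0: "poly f (alpha j) = 0" if "j < n" "j \<noteq> a" "j \<noteq> b" for j
    unfolding f_def poly_LP using that by (auto intro!: prod_zero)
  have pfa: "poly f (alpha a) \<noteq> 0" unfolding f_def poly_LP using inj a b
    by (auto simp: inj_on_def)
  have pfb: "poly f (alpha b) \<noteq> 0" unfolding f_def poly_LP using inj a b
    by (auto simp: inj_on_def)
  have red: "(\<Sum>j<n. c j * poly f (alpha j)) = c a * poly f (alpha a) + c b * poly f (alpha b)" for c
  proof -
    have "(\<Sum>j<n. c j * poly f (alpha j)) = (\<Sum>j\<in>{a,b}. c j * poly f (alpha j))"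
      using a b pf0 by (intro sum.mono_neutral_right) auto
    then show ?thesis using False by simp
  qed
  have e1: "w a * poly f (alpha a) + w b * poly f (alpha b) = 0"
  proof -
    have "(\<Sum>j<n. w j * poly f (alpha j)) = (\<Sum>m\<le>n-2. coeff f m * (\<Sum>j<n. w j * alpha j ^ m))"
      using df by (intro sum_poly_moments) simp
    also have "\<dots> = 0" using mom by simp
    finally show ?thesis using red by simp
  qed
  have e2: "u_coef n alpha a * poly f (alpha a) + u_coef n alpha b * poly f (alpha b) = 0"
    unfolding red[symmetric] using moment[OF inj, of f] df n by (simp add: coeff_eq_0)
  have "w a * u_coef n alpha b * (poly f (alpha a) * poly f (alpha b)) =
        (w a * poly f (alpha a)) * (u_coef n alpha b * poly f (alpha b))" by (simp add: mult_ac)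
  also have "\<dots> = (w b * poly f (alpha b)) * (u_coef n alpha a * poly f (alpha a))"
    using e1 e2 by (simp add: eq_neg_iff_add_eq_0[symmetric] add_eq_0_iff2)
  also have "\<dots> = w b * u_coef n alpha a * (poly f (alpha a) * poly f (alpha b))" by (simp add: mult_ac)
  finally show ?thesis using pfa pfb by simp
qed

lemma interp_eval:
  assumes inj: "inj_on alpha {..<n}" and l: "l < n"
  shows "poly (\<Sum>j<n. smult (c j * u_coef n alpha j) (LP alpha ({..<n} - {j}))) (alpha l) = c l"
proof -
  have "poly (\<Sum>j<n. smult (c j * u_coef n alpha j) (LP alpha ({..<n} - {j}))) (alpha l) =
     (\<Sum>j<n. c j * u_coef n alpha j * (if l = j then inverse (u_coef n alpha j) else 0))"
    by (simp add: poly_sum Pj_eval[OF inj _ l])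
  also have "\<dots> = c l * u_coef n alpha l * inverse (u_coef n alpha l)"
    using l by (simp add: if_distrib[of "\<lambda>x. _ * x"] sum.delta cong: if_cong)
  also have "\<dots> = c l" using u_coef_nz[OF inj l] by simp
  finally show ?thesis .
qed

lemma interp_deg:
  "degree (\<Sum>j<n. smult (c j * u_coef n alpha j) (LP alpha ({..<n} - {j}))) \<le> n - 1"
proof (rule degree_sum_le)
  fix j assume "j \<in> {..<n}"
  then have "degree (LP alpha ({..<n} - {j})) = n - 1" by (simp add: LP_degree)
  then show "degree (smult (c j * u_coef n alpha j) (LP alpha ({..<n} - {j}))) \<le> n - 1"
    by (metis degree_smult_le)
qed simp

lemma moment_shift:
  assumes inj: "inj_on alpha {..<n}" and n: "0 < n" and S: "(\<Sum>j<n. alpha j) = 0"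
    and deg: "degree g + e \<le> n" and e: "e \<le> n - 1"
  shows "(\<Sum>j<n. u_coef n alpha j * (poly g (alpha j) * alpha j ^ e)) = coeff g (n - 1 - e)"
proof -
  have d: "degree (monom 1 e * g) \<le> n"
    by (metis add.commute deg degree_monom_le degree_mult_le add_le_mono le_trans order_refl)
  have "(\<Sum>j<n. u_coef n alpha j * poly (monom 1 e * g) (alpha j)) =
        coeff (monom 1 e * g) (n - 1) + coeff (monom 1 e * g) n * (\<Sum>j<n. alpha j)"
    by (rule moment[OF inj n d])
  moreover have "coeff (monom 1 e * g) (n - 1) = coeff g (n - 1 - e)"
    using e by (simp add: coeff_monom_mult)
  ultimately show ?thesis using S by (simp add: poly_monom mult_ac)
qed



lemma nonsq_mult:
  fixes a b :: "'a::{finite,field}"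
  assumes a: "\<not> is_square a" and b: "\<not> is_square b"
  shows "is_square (a * b)"
proof (rule ccontr)
  assume ab: "\<not> is_square (a * b)"
  have a0: "a \<noteq> 0" using a unfolding is_square_def by (metis power_zero_numeral)
  have b0: "b \<noteq> 0" using b unfolding is_square_def by (metis power_zero_numeral)
  define U where "U = (UNIV :: 'a set) - {0}"
  define Q where "Q = (\<lambda>x. x ^ 2) ` U"
  have fin: "finite Q" "finite U" by auto
  have "card U \<le> card (\<Union>q\<in>Q. {x. x ^ 2 = q})"
    by (rule card_mono) (auto simp: Q_def U_def)
  also have "\<dots> \<le> (\<Sum>q\<in>Q. card {x. x ^ 2 = q})" by (rule card_UN_le) simp
  also have "\<dots> \<le> (\<Sum>q\<in>Q. 2)"
  proof (rule sum_mono)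
    fix q assume "q \<in> Q"
    then obtain y where y: "q = y ^ 2" unfolding Q_def by auto
    have "{x. x ^ 2 = q} \<subseteq> {y, -y}"
    proof
      fix x assume "x \<in> {x. x ^ 2 = q}"
      then have "(x - y) * (x + y) = 0" using y by (simp add: algebra_simps power2_eq_square)
      then show "x \<in> {y, -y}" by (auto simp: add_eq_0_iff2)
    qed
    then have "card {x. x ^ 2 = q} \<le> card {y, -y}" by (intro card_mono) auto
    also have "\<dots> \<le> 2" by (simp add: card_insert_le_m1)
    finally show "card {x. x ^ 2 = q} \<le> 2" .
  qed
  finally have cU: "card U \<le> 2 * card Q" by simp
  have cQa: "card ((\<lambda>x. a * x) ` Q) = card Q" using a0 by (intro card_image) (auto simp: inj_on_def)
  have cQb: "card ((\<lambda>x. b * x) ` Q) = card Q" using b0 by (intro card_image) (auto simp: inj_on_def)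
  have d1: "Q \<inter> (\<lambda>x. a * x) ` Q = {}"
  proof (rule ccontr)
    assume "Q \<inter> (\<lambda>x. a * x) ` Q \<noteq> {}"
    then obtain s t where "s \<noteq> 0" "t \<noteq> 0" "s ^ 2 = a * t ^ 2" unfolding Q_def U_def by auto
    then have "a = (s / t) ^ 2" by (simp add: field_simps)
    then show False using a unfolding is_square_def by blast
  qed
  have d2: "Q \<inter> (\<lambda>x. b * x) ` Q = {}"
  proof (rule ccontr)
    assume "Q \<inter> (\<lambda>x. b * x) ` Q \<noteq> {}"
    then obtain s t where "s \<noteq> 0" "t \<noteq> 0" "s ^ 2 = b * t ^ 2" unfolding Q_def U_def by auto
    then have "b = (s / t) ^ 2" by (simp add: field_simps)
    then show False using b unfolding is_square_def by blast
  qed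
  have d3: "(\<lambda>x. a * x) ` Q \<inter> (\<lambda>x. b * x) ` Q = {}"
  proof (rule ccontr)
    assume "(\<lambda>x. a * x) ` Q \<inter> (\<lambda>x. b * x) ` Q \<noteq> {}"
    then obtain s t where st: "s \<noteq> 0" "t \<noteq> 0" "a * s ^ 2 = b * t ^ 2" unfolding Q_def U_def by auto
    then have "a * b = (b * t / s) ^ 2" by (simp add: field_simps power2_eq_square)
    then show False using ab unfolding is_square_def by blast
  qed
  have sub: "Q \<union> (\<lambda>x. a * x) ` Q \<union> (\<lambda>x. b * x) ` Q \<subseteq> U"
    using a0 b0 unfolding Q_def U_def by auto
  have "card (Q \<union> (\<lambda>x. a * x) ` Q \<union> (\<lambda>x. b * x) ` Q) = 3 * card Q"
    using d1 d2 d3 cQa cQb by (simp add: card_Un_disjoint Int_Un_distrib2)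
  moreover have "card (Q \<union> (\<lambda>x. a * x) ` Q \<union> (\<lambda>x. b * x) ` Q) \<le> card U"
    using sub by (intro card_mono) auto
  moreover have "1 \<in> Q" unfolding Q_def U_def by (auto intro: image_eqI[where x=1])
  then have "card Q > 0" using fin by (auto simp: card_gt_0_iff)
  ultimately show False using cU by simp
qed



lemma bilin:
  fixes a v :: "nat \<Rightarrow> 'a::field"
  shows "(\<Sum>j<n. (\<Sum>i<k. c i * (a j ^ E i * v j)) * (\<Sum>i<k. d i * (a j ^ E i * v j))) =
    (\<Sum>i<k. \<Sum>i'<k. c i * d i' * (\<Sum>j<n. v j ^ 2 * a j ^ (E i + E i')))"
proof -
  have "(\<Sum>j<n. (\<Sum>i<k. c i * (a j ^ E i * v j)) * (\<Sum>i<k. d i * (a j ^ E i * v j))) =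
     (\<Sum>j<n. \<Sum>i<k. \<Sum>i'<k. c i * d i' * (v j ^ 2 * a j ^ (E i + E i')))"
    by (simp add: sum_product power_add power2_eq_square mult_ac)
  also have "\<dots> = (\<Sum>i<k. \<Sum>j<n. \<Sum>i'<k. c i * d i' * (v j ^ 2 * a j ^ (E i + E i')))"
    by (rule sum.swap)
  also have "\<dots> = (\<Sum>i<k. \<Sum>i'<k. \<Sum>j<n. c i * d i' * (v j ^ 2 * a j ^ (E i + E i')))"
    by (rule sum.cong[OF refl], rule sum.swap)
  also have "\<dots> = (\<Sum>i<k. \<Sum>i'<k. c i * d i' * (\<Sum>j<n. v j ^ 2 * a j ^ (E i + E i')))"
    by (simp add: sum_distrib_left)
  finally show ?thesis .
qed

lemma mem_C:
  "x \<in> C_hv n h k alpha v \<longleftrightarrow>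
   (\<exists>c. x = (\<lambda>j. if j < n then (\<Sum>i<k. c i * (alpha j ^ row_exp k h i * v j)) else 0))"
  unfolding C_hv_def row_space_def G_hk_def by simp

lemma row_in_C:
  assumes "i < k"
  shows "(\<lambda>j. if j < n then alpha j ^ row_exp k h i * v j else 0) \<in> C_hv n h k alpha v"
  unfolding mem_C
proof (rule exI[of _ "\<lambda>i'. if i' = i then 1 else 0"], rule ext)
  fix j
  have "(\<Sum>i'<k. (if i' = i then 1 else 0) * (alpha j ^ row_exp k h i' * v j)) =
        (\<Sum>i'<k. if i' = i then alpha j ^ row_exp k h i' * v j else 0)"
    by (rule sum.cong) auto
  also have "\<dots> = alpha j ^ row_exp k h i * v j" using assms by (simp add: sum.delta')
  finally show "(if j < n then alpha j ^ row_exp k h i * v j else 0) =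
    (if j < n then \<Sum>i'<k. (if i' = i then 1 else 0) * (alpha j ^ row_exp k h i' * v j) else 0)"
    by simp
qed

lemma only_if_dir:
  fixes alpha v :: "nat \<Rightarrow> 'a::field"
  assumes k3: "k \<ge> 3" and nk: "n = 2 * k"
    and hr: "h = (k - 1) + r" and r1: "1 \<le> r" and rk: "r \<le> k - 2"
    and inj: "inj_on alpha {..<n}"
    and vnz: "\<forall>i<n. v i \<noteq> 0" and sd: "self_dual n (C_hv n h k alpha v)"
  shows "r = 1 \<and>
          ((\<forall>i<n. is_square (u_coef n alpha i)) \<or> (\<forall>i<n. \<not> is_square (u_coef n alpha i))) \<and>
          (\<Sum>i<n. alpha i) = 0"
proof -
  define E where "E = row_exp k h"
  have Ek: "E i = (if i < k - 1 then i else h)" for i unfolding E_def row_exp_def by simp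
  define w where "w j = v j ^ 2" for j
  define S where "S = (\<Sum>i<n. alpha i)"
  have n0: "0 < n" "2 \<le> n" using k3 nk by auto
  have mom0: "(\<Sum>j<n. w j * alpha j ^ (E i + E i')) = 0" if i: "i < k" "i' < k" for i i'
  proof -
    let ?y = "\<lambda>j. if j < n then alpha j ^ E i * v j else 0"
    let ?x = "\<lambda>j. if j < n then alpha j ^ E i' * v j else 0"
    have "?y \<in> dual_code n (C_hv n h k alpha v)"
      using row_in_C[OF i(1)] sd unfolding self_dual_def E_def by blast
    moreover have "?x \<in> C_hv n h k alpha v" using row_in_C[OF i(2)] unfolding E_def .
    ultimately have "(\<Sum>j<n. ?x j * ?y j) = 0" unfolding dual_code_def mem_Collect_eq
      by (elim conjE) (drule bspec, assumption, simp)
    moreover have "(\<Sum>j<n. ?x j * ?y j) = (\<Sum>j<n. w j * alpha j ^ (E i + E i'))"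
      by (rule sum.cong) (auto simp: w_def power_add power2_eq_square mult_ac)
    ultimately show ?thesis by simp
  qed
  have momle: "(\<Sum>j<n. w j * alpha j ^ m) = 0" if m: "m \<le> n - 2" for m
  proof (cases "m \<le> 2 * k - 4")
    case True
    define i where "i = min m (k - 2)"
    have "E i = i" "E (m - i) = m - i" "i < k" "m - i < k" "E i + E (m - i) = m"
      using True k3 unfolding Ek i_def by auto
    then show ?thesis using mom0[of i "m - i"] by simp
  next
    case False
    have "E (k - 1) = h" "E (m - h) = m - h" "k - 1 < k" "m - h < k" "E (k - 1) + E (m - h) = m"
      using False k3 m nk hr r1 rk unfolding Ek by auto
    then show ?thesis using mom0[of "k - 1" "m - h"] by simp
  qed
  define lam where "lam = w 0 / u_coef n alpha 0"
  have u0: "u_coef n alpha 0 \<noteq> 0" using u_coef_nz[OF inj n0(1)] .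
  have wlam: "w j = lam * u_coef n alpha j" if j: "j < n" for j
  proof -
    have "w j * u_coef n alpha 0 = w 0 * u_coef n alpha j"
      using pair[OF inj n0(2) momle j n0(1)] by simp
    then show ?thesis unfolding lam_def using u0 by (simp add: field_simps)
  qed
  have lam0: "lam \<noteq> 0" unfolding lam_def w_def using u0 vnz n0 by simp
  have momlam: "(\<Sum>j<n. w j * alpha j ^ m) = lam * (if m = n - 1 then 1 else if m = n then S else 0)"
    if m: "m \<le> n" for m
  proof -
    have "(\<Sum>j<n. w j * alpha j ^ m) = lam * (\<Sum>j<n. u_coef n alpha j * alpha j ^ m)"
      by (simp add: sum_distrib_left wlam mult_ac)
    then show ?thesis using moment_pow[OF inj n0(1) m] unfolding S_def by simp
  qed
  have r_eq: "r = 1"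
  proof (rule ccontr)
    assume "r \<noteq> 1"
    then have "E (k - 1) = h" "E (k - r) = k - r" "k - 1 < k" "k - r < k" "E (k - 1) + E (k - r) = n - 1"
      using k3 nk hr r1 rk unfolding Ek by auto
    then have "(\<Sum>j<n. w j * alpha j ^ (n - 1)) = 0" using mom0[of "k - 1" "k - r"] by simp
    then show False using momlam[of "n - 1"] lam0 n0 by simp
  qed
  have S0: "S = 0"
  proof -
    have "E (k - 1) = h" "k - 1 < k" "E (k - 1) + E (k - 1) = n"
      using k3 nk hr r_eq unfolding Ek by auto
    then have "(\<Sum>j<n. w j * alpha j ^ n) = 0" using mom0[of "k - 1" "k - 1"] by simp
    moreover have "n \<noteq> n - 1" using n0 by simp
    ultimately show ?thesis using momlam[of n] lam0 by simp
  qed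
  have usq: "u_coef n alpha j = v j ^ 2 / lam" if "j < n" for j
    using wlam[OF that] lam0 unfolding w_def by (simp add: field_simps)
  have sq: "(\<forall>i<n. is_square (u_coef n alpha i)) \<or> (\<forall>i<n. \<not> is_square (u_coef n alpha i))"
  proof (cases "is_square lam")
    case True
    then obtain c where c: "lam = c ^ 2" unfolding is_square_def by blast
    then have "c \<noteq> 0" using lam0 by auto
    then have "is_square (u_coef n alpha i)" if "i < n" for i
      unfolding is_square_def usq[OF that] c by (auto intro: exI[of _ "v i / c"] simp: power_divide)
    then show ?thesis by blast
  next
    case False
    have "\<not> is_square (u_coef n alpha i)" if i: "i < n" for i
    proof
      assume "is_square (u_coef n alpha i)"
      then obtain y where y: "u_coef n alpha i = y ^ 2" unfolding is_square_def by blast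
      have "y \<noteq> 0" using y u_coef_nz[OF inj i] by auto
      have "lam = (v i / y) ^ 2" using usq[OF i] y lam0 \<open>y \<noteq> 0\<close>
        by (simp add: field_simps power_divide)
      then show False using False unfolding is_square_def by blast
    qed
    then show ?thesis by blast
  qed
  show ?thesis using r_eq S0 sq unfolding S_def by blast
qed

lemma if_dir:
  fixes alpha :: "nat \<Rightarrow> 'a::{finite,field}"
  assumes k3: "k \<ge> 3" and nk: "n = 2 * k" and hk: "h = k"
    and inj: "inj_on alpha {..<n}"
    and sq: "(\<forall>i<n. is_square (u_coef n alpha i)) \<or> (\<forall>i<n. \<not> is_square (u_coef n alpha i))"
    and S0: "(\<Sum>i<n. alpha i) = 0"
  shows "\<exists>v::nat \<Rightarrow> 'a. (\<forall>i<n. v i \<noteq> 0) \<and> self_dual n (C_hv n h k alpha v)"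
proof -
  define E where "E = row_exp k h"
  have Ek: "E i = (if i < k - 1 then i else k)" for i unfolding E_def row_exp_def hk by simp
  have n0: "0 < n" "2 \<le> n" using k3 nk by auto
  obtain lam where lam0: "lam \<noteq> 0" and lsq: "\<And>j. j < n \<Longrightarrow> is_square (lam * u_coef n alpha j)"
  proof (cases "\<forall>i<n. is_square (u_coef n alpha i)")
    case True
    then show ?thesis using that[of 1] by simp
  next
    case False
    then have ns: "\<forall>i<n. \<not> is_square (u_coef n alpha i)" using sq by blast
    show ?thesis
    proof (rule that[of "u_coef n alpha 0"])
      show "u_coef n alpha 0 \<noteq> 0" using u_coef_nz[OF inj n0(1)] .
      fix j assume "j < n"
      then show "is_square (u_coef n alpha 0 * u_coef n alpha j)"
        using ns n0 by (intro nonsq_mult) auto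
    qed
  qed
  define v where "v j = (SOME y. lam * u_coef n alpha j = y ^ 2)" for j
  have vsq: "v j ^ 2 = lam * u_coef n alpha j" if "j < n" for j
  proof -
    have "\<exists>y. lam * u_coef n alpha j = y ^ 2" using lsq[OF that] unfolding is_square_def .
    then show ?thesis unfolding v_def by (metis (mono_tags, lifting) someI_ex)
  qed
  have vnz: "v j \<noteq> 0" if "j < n" for j
    using vsq[OF that] lam0 u_coef_nz[OF inj that] by auto
  have momv: "(\<Sum>j<n. v j ^ 2 * alpha j ^ m) = (if m = n - 1 then lam else 0)" if m: "m \<le> n" for m
  proof -
    have "(\<Sum>j<n. v j ^ 2 * alpha j ^ m) = lam * (\<Sum>j<n. u_coef n alpha j * alpha j ^ m)"
      by (simp add: sum_distrib_left vsq mult_ac)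
    then show ?thesis using moment_pow[OF inj n0(1) m] S0 by simp
  qed
  have Esum: "(\<Sum>j<n. v j ^ 2 * alpha j ^ (E i + E i')) = 0" if "i < k" "i' < k" for i i'
  proof -
    have "E i + E i' \<le> n" "E i + E i' \<noteq> n - 1" using that k3 nk unfolding Ek by auto
    then show ?thesis using momv by simp
  qed
  have "C_hv n h k alpha v = dual_code n (C_hv n h k alpha v)"
  proof (rule equalityI; rule subsetI)
    fix x assume x: "x \<in> C_hv n h k alpha v"
    then obtain c where c: "x = (\<lambda>j. if j < n then (\<Sum>i<k. c i * (alpha j ^ E i * v j)) else 0)"
      unfolding mem_C E_def by blast
    have "(\<Sum>j<n. y j * x j) = 0" if yC: "y \<in> C_hv n h k alpha v" for y
    proof -
      obtain d where d: "y = (\<lambda>j. if j < n then (\<Sum>i<k. d i * (alpha j ^ E i * v j)) else 0)"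
        using yC unfolding mem_C E_def by blast
      have "(\<Sum>j<n. y j * x j) = (\<Sum>j<n. (\<Sum>i<k. d i * (alpha j ^ E i * v j)) * (\<Sum>i<k. c i * (alpha j ^ E i * v j)))"
        unfolding c d by simp
      also have "\<dots> = (\<Sum>i<k. \<Sum>i'<k. d i * c i' * (\<Sum>j<n. v j ^ 2 * alpha j ^ (E i + E i')))"
        by (rule bilin)
      also have "\<dots> = 0" using Esum by simp
      finally show ?thesis .
    qed
    then show "x \<in> dual_code n (C_hv n h k alpha v)" unfolding dual_code_def using c by auto
  next
    fix y assume y: "y \<in> dual_code n (C_hv n h k alpha v)"
    have y0: "y j = 0" if "j \<ge> n" for j using y that unfolding dual_code_def by auto
    have orth: "(\<Sum>j<n. alpha j ^ E i * v j * y j) = 0" if i: "i < k" for i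
    proof -
      have "(\<lambda>j. if j < n then alpha j ^ E i * v j else 0) \<in> C_hv n h k alpha v"
        using row_in_C[OF i] unfolding E_def .
      then have "(\<Sum>j<n. (if j < n then alpha j ^ E i * v j else 0) * y j) = 0"
        using y unfolding dual_code_def mem_Collect_eq
        by (elim conjE) (drule bspec, assumption, simp)
      then show ?thesis by simp
    qed
    define z where "z j = y j / v j" for j
    define g where "g = (\<Sum>j<n. smult (z j * u_coef n alpha j) (LP alpha ({..<n} - {j})))"
    have gz: "poly g (alpha l) = z l" if "l < n" for l
      unfolding g_def by (rule interp_eval[OF inj that])
    have dg: "degree g \<le> n - 1" unfolding g_def by (rule interp_deg)
    have T: "(\<Sum>j<n. u_coef n alpha j * (poly g (alpha j) * alpha j ^ E i)) = 0" if i: "i < k" for i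
    proof -
      have "(\<Sum>j<n. u_coef n alpha j * (poly g (alpha j) * alpha j ^ E i)) =
            (\<Sum>j<n. (alpha j ^ E i * v j * y j) / lam)"
      proof (rule sum.cong[OF refl])
        fix j assume j: "j \<in> {..<n}"
        have "u_coef n alpha j = v j ^ 2 / lam" using vsq j lam0 by (simp add: field_simps)
        then show "u_coef n alpha j * (poly g (alpha j) * alpha j ^ E i) = alpha j ^ E i * v j * y j / lam"
          using gz j vnz[of j] by (simp add: z_def field_simps power2_eq_square)
      qed
      also have "\<dots> = (\<Sum>j<n. alpha j ^ E i * v j * y j) / lam" by (simp add: sum_divide_distrib)
      finally show ?thesis using orth[OF i] by simp
    qed
    have high: "\<forall>m. n - 1 - i \<le> m \<longrightarrow> coeff g m = 0" if "i \<le> k - 2" for i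
      using that
    proof (induction i)
      case 0
      have "coeff g (n - 1 - 0) = 0"
        using moment_shift[OF inj n0(1) S0, of g 0] T[of 0] dg k3 unfolding Ek by simp
      moreover have "coeff g m = 0" if "m > n - 1" for m using that dg by (simp add: coeff_eq_0)
      ultimately show ?case by (metis le_neq_implies_less diff_zero)
    next
      case (Suc i)
      then have IH: "\<forall>m. n - 1 - i \<le> m \<longrightarrow> coeff g m = 0" by simp
      have dgi: "degree g \<le> n - 1 - Suc i"
        by (rule degree_le) (use IH in auto)
      have "E (Suc i) = Suc i" "Suc i < k" using Suc.prems k3 unfolding Ek by auto
      then have "coeff g (n - 1 - Suc i) = 0"
        using moment_shift[OF inj n0(1) S0, of g "Suc i"] T[of "Suc i"] dgi Suc.prems k3 nk by simp
      moreover have "n - 1 - i = Suc (n - 1 - Suc i)" using Suc.prems k3 nk by simp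
      ultimately show ?case using IH by (metis le_eq_less_or_eq Suc_le_eq)
    qed
    have hi: "coeff g m = 0" if "m > k" for m
      using high[of "k - 2"] that k3 nk by auto
    have dgk: "degree g \<le> k" by (rule degree_le) (use hi in auto)
    have km1: "coeff g (k - 1) = 0"
    proof -
      have "E (k - 1) = k" "k - 1 < k" using k3 unfolding Ek by auto
      then show ?thesis
        using moment_shift[OF inj n0(1) S0, of g k] T[of "k - 1"] dgk k3 nk by simp
    qed
    define c where "c i = coeff g (E i)" for i
    have pg: "poly g x = (\<Sum>i<k. c i * x ^ E i)" for x
    proof -
      obtain K where K: "k = Suc K" using k3 by (cases k) auto
      have EK: "E i = i" if "i < K" for i using that K unfolding Ek by simp
      have "poly g x = (\<Sum>m\<le>degree g. coeff g m * x ^ m)" by (rule poly_altdef)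
      also have "\<dots> = (\<Sum>m\<le>k. coeff g m * x ^ m)"
        using dgk by (intro sum.mono_neutral_left) (auto simp: coeff_eq_0)
      also have "\<dots> = coeff g k * x ^ k + (\<Sum>m<K. coeff g m * x ^ m)"
        using km1 K by (simp add: sum.atMost_Suc sum.lessThan_Suc lessThan_Suc_atMost[symmetric])
      also have "\<dots> = (\<Sum>i<k. c i * x ^ E i)"
        using K by (simp add: sum.lessThan_Suc c_def EK Ek)
      finally show ?thesis .
    qed
    have "y = (\<lambda>j. if j < n then (\<Sum>i<k. c i * (alpha j ^ E i * v j)) else 0)"
    proof
      fix j
      show "y j = (if j < n then (\<Sum>i<k. c i * (alpha j ^ E i * v j)) else 0)"
      proof (cases "j < n")
        case True
        have "y j = v j * poly g (alpha j)" using gz[OF True] vnz[OF True] by (simp add: z_def)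
        also have "\<dots> = (\<Sum>i<k. c i * (alpha j ^ E i * v j))"
          by (simp add: pg sum_distrib_left mult_ac)
        finally show ?thesis using True by simp
      qed (use y0 in simp)
    qed
    then show "y \<in> C_hv n h k alpha v" unfolding mem_C E_def by blast
  qed
  then show ?thesis using vnz unfolding self_dual_def by blast
qed


theorem theorem4p14:
  fixes alpha :: "nat \<Rightarrow> 'a::{finite,field}" and k n h r :: nat
  assumes "k \<ge> 3" and "n = 2 * k" and "n \<le> card (UNIV :: 'a set)"
    and "h = (k - 1) + r" and "1 \<le> r" and "r \<le> k - 2"
    and "inj_on alpha {..<n}"
  shows "(\<exists>v::nat \<Rightarrow> 'a. (\<forall>i<n. v i \<noteq> 0) \<and> self_dual n (C_hv n h k alpha v))
     \<longleftrightarrow> (r = 1 \<and>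
          ((\<forall>i<n. is_square (u_coef n alpha i)) \<or> (\<forall>i<n. \<not> is_square (u_coef n alpha i))) \<and>
          (\<Sum>i<n. alpha i) = 0)"
proof
  assume "\<exists>v::nat \<Rightarrow> 'a. (\<forall>i<n. v i \<noteq> 0) \<and> self_dual n (C_hv n h k alpha v)"
  then obtain v :: "nat \<Rightarrow> 'a" where "\<forall>i<n. v i \<noteq> 0" "self_dual n (C_hv n h k alpha v)" by blast
  then show "r = 1 \<and>
          ((\<forall>i<n. is_square (u_coef n alpha i)) \<or> (\<forall>i<n. \<not> is_square (u_coef n alpha i))) \<and>
          (\<Sum>i<n. alpha i) = 0"
    using only_if_dir[of k n h r alpha v] assms by blast
next
  assume R: "r = 1 \<and>
          ((\<forall>i<n. is_square (u_coef n alpha i)) \<or> (\<forall>i<n. \<not> is_square (u_coef n alpha i))) \<and>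
          (\<Sum>i<n. alpha i) = 0"
  then have "h = k" using assms by simp
  then show "\<exists>v::nat \<Rightarrow> 'a. (\<forall>i<n. v i \<noteq> 0) \<and> self_dual n (C_hv n h k alpha v)"
    using if_dir[of k n h alpha] R assms by blast
qed

end
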